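(* Fix any $d,r\in\mathbb{N}$. For every $m\in\mathbb{N}$ there exists $m'=m'(d,r,m)$ such that every graph $G$ with $(r,m')$-rank more than $d$ contains $T_{d,m}$ as an $r$-shallow topological minor.
   Context: $T_{d,m}$ is the rooted tree of depth $d$ (all leaf-to-root paths have $d$ edges) in which every non-leaf vertex has exactly $m$ children. $H$ is an $r$-shallow topological minor of $G$ if $G$ has a subgraph isomorphic to a graph obtained from $H$ by replacing each edge by a path with at most $r$ internal vertices (paths internally disjoint). $N_r^G(v)$ is the closed $r$-neighborhood of $v$; $G-S$ is the subgraph induced on $V(G)\setminus S$. The $(r,m)$-rank of vertices of $G$ (values in $\mathbb{N}\cup\{\infty\}$, with $\infty$ larger than every integer) is defined by: initially every vertex has rank $\infty$; in rounds $i=1,2,\dots$, every vertex $v$ currently of rank $\infty$ receives rank $i$ if there exists $S\subseteq V(G)\setminus\{v\}$ with $|S|\le m$ such that every vertex of $N_r^{G-S}(v)\setminus\{v\}$ received a finite rank in rounds $1,\dots,i-1$; the procedure stops when all ranks are finite or a round assigns no new rank. The $(r,m)$-rank of $G$ is the maximum $(r,m)$-rank of a vertex of $G$. *)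

theory Defs
  imports Main
begin

definition graph :: "'a set \<Rightarrow> ('a \<Rightarrow> 'a \<Rightarrow> bool) \<Rightarrow> bool" where
  "graph V E \<longleftrightarrow> finite V \<and> (\<forall>u v. E u v \<longrightarrow> u \<in> V \<and> v \<in> V)
     \<and> (\<forall>u v. E u v \<longrightarrow> E v u) \<and> (\<forall>v. \<not> E v v)"

fun nbhd :: "'a set \<Rightarrow> ('a \<Rightarrow> 'a \<Rightarrow> bool) \<Rightarrow> nat \<Rightarrow> 'a \<Rightarrow> 'a set" where
  "nbhd W E 0 v = (if v \<in> W then {v} else {})"
| "nbhd W E (Suc k) v = nbhd W E k v \<union> {u \<in> W. \<exists>w \<in> nbhd W E k v. E w u}"

text \<open>ranked V E r m i = set of vertices of (r,m)-rank at most i (finite rank assigned in rounds 1..i).\<close>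
fun ranked :: "'a set \<Rightarrow> ('a \<Rightarrow> 'a \<Rightarrow> bool) \<Rightarrow> nat \<Rightarrow> nat \<Rightarrow> nat \<Rightarrow> 'a set" where
  "ranked V E r m 0 = {}"
| "ranked V E r m (Suc i) = ranked V E r m i \<union>
     {v \<in> V. \<exists>S. S \<subseteq> V - {v} \<and> card S \<le> m \<and>
          nbhd (V - S) E r v - {v} \<subseteq> ranked V E r m i}"

text \<open>The (r,m)-rank of G is more than d: some vertex has rank > d (possibly infinite).\<close>
definition rank_gt :: "'a set \<Rightarrow> ('a \<Rightarrow> 'a \<Rightarrow> bool) \<Rightarrow> nat \<Rightarrow> nat \<Rightarrow> nat \<Rightarrow> bool" where
  "rank_gt V E r m d \<longleftrightarrow> (\<exists>v \<in> V. v \<notin> ranked V E r m d)"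

definition is_path :: "'a set \<Rightarrow> ('a \<Rightarrow> 'a \<Rightarrow> bool) \<Rightarrow> 'a list \<Rightarrow> bool" where
  "is_path V E p \<longleftrightarrow> p \<noteq> [] \<and> distinct p \<and> set p \<subseteq> V \<and>
     (\<forall>i. Suc i < length p \<longrightarrow> E (p ! i) (p ! Suc i))"

definition interior :: "'a list \<Rightarrow> 'a set" where
  "interior p = set (butlast (tl p))"

definition shallow_top_minor ::
  "nat \<Rightarrow> 'b set \<Rightarrow> ('b \<Rightarrow> 'b \<Rightarrow> bool) \<Rightarrow> 'a set \<Rightarrow> ('a \<Rightarrow> 'a \<Rightarrow> bool) \<Rightarrow> bool" where
  "shallow_top_minor r VH EH V E \<longleftrightarrow>
     (\<exists>(f :: 'b \<Rightarrow> 'a) (P :: 'b set \<Rightarrow> 'a list).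
        inj_on f VH \<and> f ` VH \<subseteq> V \<and>
        (\<forall>a b. EH a b \<longrightarrow>
            is_path V E (P {a, b}) \<and>
            {hd (P {a, b}), last (P {a, b})} = {f a, f b} \<and>
            length (P {a, b}) \<le> r + 2 \<and>
            interior (P {a, b}) \<inter> f ` VH = {}) \<and>
        (\<forall>a b a' b'. EH a b \<longrightarrow> EH a' b' \<longrightarrow> {a, b} \<noteq> {a', b'} \<longrightarrow>
            interior (P {a, b}) \<inter> interior (P {a', b'}) = {}))"

text \<open>T_{d,m}: vertices are words over {0..<m} of length at most d (root = []);
  the children of w (length w < d) are w @ [i], i < m.\<close>
definition tree_V :: "nat \<Rightarrow> nat \<Rightarrow> nat list set" where
  "tree_V d m = {w. length w \<le> d \<and> set w \<subseteq> {..<m}}"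

definition tree_E :: "nat \<Rightarrow> nat \<Rightarrow> nat list \<Rightarrow> nat list \<Rightarrow> bool" where
  "tree_E d m u w \<longleftrightarrow> u \<in> tree_V d m \<and> w \<in> tree_V d m \<and>
     ((\<exists>i. w = u @ [i]) \<or> (\<exists>i. u = w @ [i]))"

end

theory Submission
  imports Defs
begin

lemma interior_sub: "interior p \<subseteq> set p"
  unfolding interior_def by (metis in_set_butlastD list.set_sel(2) subsetI tl_Nil)

lemma interior_hd: "distinct p \<Longrightarrow> hd p \<notin> interior p"
  unfolding interior_def by (cases p) (auto dest: in_set_butlastD)

lemma interior_last: "distinct p \<Longrightarrow> p \<noteq> [] \<Longrightarrow> last p \<notin> interior p"
proof (cases p)
  case (Cons x rest)
  assume d: "distinct p"
  show ?thesis
  proof (cases "rest = []")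
    case True then show ?thesis using Cons by (simp add: interior_def)
  next
    case False
    have "distinct rest" using d Cons by simp
    then have "distinct (butlast rest @ [last rest])" using False by simp
    then have "last rest \<notin> set (butlast rest)" by simp
    then show ?thesis using Cons False by (simp add: interior_def)
  qed
qed simp

lemma interior_card: "card (interior p) \<le> length p - 2"
  unfolding interior_def by (metis card_length length_butlast length_tl diff_diff_left one_add_one)

lemma is_path_mono: "is_path W E p \<Longrightarrow> W \<subseteq> V \<Longrightarrow> is_path V E p"
  unfolding is_path_def by auto

lemma nbhd_path: "u \<in> nbhd W E n x \<Longrightarrow> \<exists>p. is_path W E p \<and> hd p = x \<and> last p = u \<and> length p \<le> Suc n"
proof (induction n arbitrary: u)
  case 0
  then have "u = x" "x \<in> W" by (auto split: if_splits)
  then show ?case by (intro exI[of _ "[x]"]) (auto simp: is_path_def)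
next
  case (Suc n)
  show ?case
  proof (cases "u \<in> nbhd W E n x")
    case True
    then show ?thesis using Suc.IH by fastforce
  next
    case False
    then obtain w where uW: "u \<in> W" and w: "w \<in> nbhd W E n x" and Ewu: "E w u" using Suc.prems by auto
    obtain p where p: "is_path W E p" "hd p = x" "last p = w" "length p \<le> Suc n" using Suc.IH[OF w] by blast
    show ?thesis
    proof (cases "u \<in> set p")
      case True
      then obtain j where j: "j < length p" "p ! j = u" by (meson in_set_conv_nth)
      let ?q = "take (Suc j) p"
      have "is_path W E ?q" using p(1) j unfolding is_path_def
        by (auto dest: in_set_takeD)
      moreover have "hd ?q = x" using p(2) by simp
      moreover have "last ?q = u"
      proof -
        have "?q \<noteq> []" using j by (cases p) auto
        then have "last ?q = ?q ! (length ?q - 1)" by (rule last_conv_nth)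
        also have "length ?q - 1 = j" using j by simp
        finally show ?thesis using j by simp
      qed
      moreover have "length ?q \<le> Suc (Suc n)" using p(4) by simp
      ultimately show ?thesis by blast
    next
      case False
      let ?q = "p @ [u]"
      have pne: "p \<noteq> []" using p(1) is_path_def by auto
      have "\<forall>i. Suc i < length ?q \<longrightarrow> E (?q ! i) (?q ! Suc i)"
      proof (intro allI impI)
        fix i assume i: "Suc i < length ?q"
        show "E (?q ! i) (?q ! Suc i)"
        proof (cases "Suc i < length p")
          case True then show ?thesis using p(1) by (simp add: nth_append is_path_def)
        next
          case False
          then have "i = length p - 1" using i by simp
          then show ?thesis using pne p(3) Ewu False by (simp add: nth_append last_conv_nth)
        qed
      qed
      then have "is_path W E ?q" using p(1) False uW unfolding is_path_def by auto
      moreover have "hd ?q = x" using p(2) pne by simp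
      ultimately show ?thesis using p(4) by (intro exI[of _ ?q]) auto
    qed
  qed
qed

lemma finite_tree: "finite (tree_V d m)"
proof -
  have "tree_V d m = {xs. set xs \<subseteq> {..<m} \<and> length xs \<le> d}" unfolding tree_V_def by auto
  then show ?thesis using finite_lists_length_le[of "{..<m}" d] by simp
qed


definition Uset :: "nat list set \<Rightarrow> (nat list \<Rightarrow> 'a) \<Rightarrow> (nat list \<Rightarrow> 'a list) \<Rightarrow> 'a set" where
  "Uset A f Q = f ` A \<union> (\<Union>w\<in>A-{[]}. interior (Q w))"

definition Inv :: "'a set \<Rightarrow> ('a \<Rightarrow> 'a \<Rightarrow> bool) \<Rightarrow> nat \<Rightarrow> nat \<Rightarrow> nat \<Rightarrow> nat \<Rightarrow> nat list set
   \<Rightarrow> (nat list \<Rightarrow> 'a) \<Rightarrow> (nat list \<Rightarrow> 'a list) \<Rightarrow> bool" where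
  "Inv V E r m' d m A f Q \<longleftrightarrow>
   [] \<in> A \<and> A \<subseteq> tree_V d m \<and> (\<forall>w\<in>A. w \<noteq> [] \<longrightarrow> butlast w \<in> A) \<and>
   (\<forall>w\<in>A. f w \<in> V \<and> f w \<notin> ranked V E r m' (d - length w)) \<and> inj_on f A \<and>
   (\<forall>w\<in>A-{[]}. is_path V E (Q w) \<and> hd (Q w) = f (butlast w) \<and> last (Q w) = f w \<and>
      length (Q w) \<le> r + 1 \<and> interior (Q w) \<inter> f ` A = {}) \<and>
   (\<forall>w\<in>A-{[]}. \<forall>w'\<in>A-{[]}. w \<noteq> w' \<longrightarrow> interior (Q w) \<inter> interior (Q w') = {}) \<and>
   card (Uset A f Q) \<le> card A * (r + 1)"

lemma Uset_sub: assumes "Inv V E r m' d m A f Q" shows "Uset A f Q \<subseteq> V"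
proof -
  have a: "\<forall>w\<in>A. f w \<in> V \<and> f w \<notin> ranked V E r m' (d - length w)" using assms unfolding Inv_def by (elim conjE) assumption
  have b: "\<forall>w\<in>A-{[]}. is_path V E (Q w) \<and> hd (Q w) = f (butlast w) \<and> last (Q w) = f w \<and>
      length (Q w) \<le> r + 1 \<and> interior (Q w) \<inter> f ` A = {}" using assms unfolding Inv_def by (elim conjE) assumption
  have c: "interior (Q w) \<subseteq> V" if w: "w \<in> A - {[]}" for w
  proof -
    have "is_path V E (Q w)" using b w by blast
    then have "set (Q w) \<subseteq> V" unfolding is_path_def by blast
    then show ?thesis using interior_sub[of "Q w"] by blast
  qed
  have "f ` A \<subseteq> V" using a by blast
  moreover have "(\<Union>w\<in>A-{[]}. interior (Q w)) \<subseteq> V" using c by (rule UN_least)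
  ultimately show ?thesis unfolding Uset_def by (rule Un_least)
qed

lemma step:
  assumes g: "graph V E" and I: "Inv V E r m' d m A f Q" and wA: "w \<notin> A" and wT: "w \<in> tree_V d m"
    and bw: "butlast w \<in> A" and wne: "w \<noteq> []" and cardA: "card A * (r + 1) \<le> m'"
  shows "\<exists>f' Q'. Inv V E r m' d m (insert w A) f' Q'"
proof -
  let ?U = "Uset A f Q"
  have i1: "[] \<in> A" using I unfolding Inv_def by (elim conjE) assumption
  have i2: "A \<subseteq> tree_V d m" using I unfolding Inv_def by (elim conjE) assumption
  have i3: "\<forall>w\<in>A. w \<noteq> [] \<longrightarrow> butlast w \<in> A" using I unfolding Inv_def by (elim conjE) assumption
  have i4: "\<forall>w\<in>A. f w \<in> V \<and> f w \<notin> ranked V E r m' (d - length w)" using I unfolding Inv_def by (elim conjE) assumption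
  have i5: "inj_on f A" using I unfolding Inv_def by (elim conjE) assumption
  have i6: "\<forall>w\<in>A-{[]}. is_path V E (Q w) \<and> hd (Q w) = f (butlast w) \<and> last (Q w) = f w \<and>
      length (Q w) \<le> r + 1 \<and> interior (Q w) \<inter> f ` A = {}" using I unfolding Inv_def by (elim conjE) assumption
  have i7: "\<forall>w\<in>A-{[]}. \<forall>w'\<in>A-{[]}. w \<noteq> w' \<longrightarrow> interior (Q w) \<inter> interior (Q w') = {}" using I unfolding Inv_def by (elim conjE) assumption
  have i8: "card (Uset A f Q) \<le> card A * (r + 1)" using I unfolding Inv_def by (elim conjE) assumption
  define x where "x = f (butlast w)"
  define k where "k = d - length w"
  have lw: "length w \<le> d" using wT unfolding tree_V_def by auto
  have dk: "d - length (butlast w) = Suc k" using lw wne unfolding k_def by (cases w rule: rev_cases) auto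
  have xx: "f (butlast w) \<in> V \<and> f (butlast w) \<notin> ranked V E r m' (d - length (butlast w))" using i4 bw by blast
  have xV: "x \<in> V" using xx unfolding x_def by blast
  have xr: "x \<notin> ranked V E r m' (Suc k)" using xx unfolding x_def dk by blast
  have UV: "?U \<subseteq> V" using Uset_sub[OF I] .
  have finV: "finite V" using g unfolding graph_def by simp
  define S where "S = ?U - {x}"
  have SV: "S \<subseteq> V - {x}" using UV unfolding S_def by auto
  have cS: "card S \<le> m'"
  proof -
    have "card S \<le> card ?U" unfolding S_def using finite_subset[OF UV finV] by (simp add: card_Diff1_le)
    then show ?thesis using i8 cardA by linarith
  qed
  have nex: "\<not> (\<exists>S. S \<subseteq> V - {x} \<and> card S \<le> m' \<and> nbhd (V - S) E r x - {x} \<subseteq> ranked V E r m' k)"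
    using xr xV by simp
  have "\<not> (nbhd (V - S) E r x - {x} \<subseteq> ranked V E r m' k)"
    using nex SV cS by blast
  then obtain u where u: "u \<in> nbhd (V - S) E r x" "u \<noteq> x" "u \<notin> ranked V E r m' k" by auto
  obtain p where p: "is_path (V - S) E p" "hd p = x" "last p = u" "length p \<le> Suc r"
    using nbhd_path[OF u(1)] by blast
  have pV: "is_path V E p" using is_path_mono[OF p(1)] by blast
  have pne: "p \<noteq> []" and pd: "distinct p" using p(1) unfolding is_path_def by auto
  have setp: "set p \<inter> ?U \<subseteq> {x}" using p(1) unfolding is_path_def S_def by auto
  have uset: "u \<in> set p" using p(3) pne by auto
  have uU: "u \<notin> ?U" using setp uset u(2) by auto
  have uV: "u \<in> V" using pV uset unfolding is_path_def by auto
  have intU: "interior p \<inter> ?U = {}" using setp interior_sub[of p] interior_hd[OF pd] p(2) by auto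
  have uint: "u \<notin> interior p" using interior_last[OF pd pne] p(3) by simp
  define f' where "f' = f(w := u)"
  define Q' where "Q' = Q(w := p)"
  have fA: "\<forall>v\<in>A. f' v = f v" unfolding f'_def using wA by auto
  have QA: "\<forall>v\<in>A. Q' v = Q v" unfolding Q'_def using wA by auto
  have fimA: "f' ` A = f ` A" using fA by (intro image_cong) auto
  have fw: "f' w = u" unfolding f'_def by simp
  have fimg: "f' ` insert w A = insert u (f ` A)" using fimA fw by simp
  have U': "Uset (insert w A) f' Q' = insert u (?U \<union> interior p)"
  proof -
    have "(\<Union>v\<in>insert w A-{[]}. interior (Q' v)) = interior p \<union> (\<Union>v\<in>A-{[]}. interior (Q v))"
      using wne QA unfolding Q'_def by auto
    then show ?thesis unfolding Uset_def fimg by auto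
  qed
  have fU: "f ` A \<subseteq> ?U" unfolding Uset_def by auto
  have intsub: "\<And>v. v \<in> A - {[]} \<Longrightarrow> interior (Q v) \<subseteq> ?U" unfolding Uset_def by auto
  have finA: "finite A" using i2 finite_tree by (meson finite_subset)
  have "Inv V E r m' d m (insert w A) f' Q'"
    unfolding Inv_def
  proof (intro conjI)
    show "[] \<in> insert w A" using i1 by auto
    show "insert w A \<subseteq> tree_V d m" using i2 wT by auto
    show "\<forall>v\<in>insert w A. v \<noteq> [] \<longrightarrow> butlast v \<in> insert w A" using i3 bw by auto
    show "\<forall>v\<in>insert w A. f' v \<in> V \<and> f' v \<notin> ranked V E r m' (d - length v)"
      using i4 fA uV u(3) unfolding k_def f'_def by auto
    show "inj_on f' (insert w A)"
    proof -
      have "inj_on f' A" using i5 fA inj_on_cong[of A f' f] by auto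
      moreover have "f' w \<notin> f' ` A" using fA uU fU unfolding f'_def by auto
      ultimately show ?thesis using wA by simp
    qed
    show "\<forall>v\<in>insert w A - {[]}. is_path V E (Q' v) \<and> hd (Q' v) = f' (butlast v) \<and> last (Q' v) = f' v \<and>
      length (Q' v) \<le> r + 1 \<and> interior (Q' v) \<inter> f' ` insert w A = {}"
    proof
      fix v assume v: "v \<in> insert w A - {[]}"
      show "is_path V E (Q' v) \<and> hd (Q' v) = f' (butlast v) \<and> last (Q' v) = f' v \<and>
        length (Q' v) \<le> r + 1 \<and> interior (Q' v) \<inter> f' ` insert w A = {}"
      proof (cases "v = w")
        case True
        then show ?thesis using pV p intU fU uint fA bw unfolding fimg x_def
          by (auto simp: Q'_def f'_def)
      next
        case False
        then have vA: "v \<in> A - {[]}" using v by auto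
        then have bvA: "butlast v \<in> A" using i3 by auto
        have "u \<notin> interior (Q v)" using intsub[OF vA] uU by auto
        moreover have "Q' v = Q v" "f' v = f v" "f' (butlast v) = f (butlast v)" using vA bvA fA QA by auto
        ultimately show ?thesis using i6 vA unfolding fimg by auto
      qed
    qed
    show "\<forall>v\<in>insert w A - {[]}. \<forall>v'\<in>insert w A - {[]}. v \<noteq> v' \<longrightarrow> interior (Q' v) \<inter> interior (Q' v') = {}"
    proof (intro ballI impI)
      fix v v' assume v: "v \<in> insert w A - {[]}" and v': "v' \<in> insert w A - {[]}" and ne: "v \<noteq> v'"
      show "interior (Q' v) \<inter> interior (Q' v') = {}"
      proof (cases "v = w")
        case True
        then have "v' \<in> A - {[]}" using v' ne by auto
        then show ?thesis using True intsub intU QA by (force simp: Q'_def)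
      next
        case False
        then have vA: "v \<in> A - {[]}" using v by auto
        show ?thesis
        proof (cases "v' = w")
          case True
          then show ?thesis using vA intsub intU QA by (force simp: Q'_def)
        next
          case False
          then have "v' \<in> A - {[]}" using v' by auto
          then show ?thesis using vA ne i7 QA by auto
        qed
      qed
    qed
    show "card (Uset (insert w A) f' Q') \<le> card (insert w A) * (r + 1)"
    proof -
      have finU: "finite ?U" using finite_subset[OF UV finV] .
      have "card (Uset (insert w A) f' Q') \<le> Suc (card (?U \<union> interior p))"
        unfolding U' by (simp add: card_insert_le_m1 card_insert_if finU interior_def)
      also have "\<dots> \<le> Suc (card ?U + card (interior p))" by (simp add: card_Un_le)
      also have "card (interior p) \<le> r" using interior_card[of p] p(4) by linarith
      also have "card ?U \<le> card A * (r + 1)" using i8 by auto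
      finally show ?thesis using finA wA by simp
    qed
  qed
  then show ?thesis by blast
qed


lemma the_child:
  assumes "c \<noteq> []"
  shows "(THE c'. c' \<in> {butlast c, c} \<and> c' \<noteq> [] \<and> butlast c' \<in> {butlast c, c}) = c"
proof (rule the_equality)
  show "c \<in> {butlast c, c} \<and> c \<noteq> [] \<and> butlast c \<in> {butlast c, c}" using assms by simp
next
  fix c' assume h: "c' \<in> {butlast c, c} \<and> c' \<noteq> [] \<and> butlast c' \<in> {butlast c, c}"
  have l: "length (butlast c') < length c'" using h by (cases c' rule: rev_cases) auto
  have l2: "length (butlast c) < length c" using assms by (cases c rule: rev_cases) auto
  show "c' = c"
  proof (rule ccontr)
    assume "c' \<noteq> c"
    then have cc: "c' = butlast c" using h by blast
    then have "butlast c' = c' \<or> butlast c' = c" using h by blast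
    then show False
    proof
      assume "butlast c' = c'" then show False using l by simp
    next
      assume "butlast c' = c" then show False using l l2 cc by simp
    qed
  qed
qed

lemma tree_edge:
  assumes "tree_E d m a b"
  shows "\<exists>c. c \<in> tree_V d m \<and> c \<noteq> [] \<and> butlast c \<in> tree_V d m \<and> {a, b} = {butlast c, c}"
  using assms unfolding tree_E_def by auto

lemma build:
  assumes g: "graph V E" and v0: "v0 \<in> V" "v0 \<notin> ranked V E r m' d"
    and m': "card (tree_V d m) * (r + 1) \<le> m'"
  shows "n < card (tree_V d m) \<Longrightarrow> \<exists>A f Q. Inv V E r m' d m A f Q \<and> card A = Suc n"
proof (induction n)
  case 0
  have "Inv V E r m' d m {[]} (\<lambda>_. v0) (\<lambda>_. [])"
    unfolding Inv_def Uset_def using v0 by (auto simp: tree_V_def)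
  then show ?case by force
next
  case (Suc n)
  then obtain A f Q where I: "Inv V E r m' d m A f Q" and cA: "card A = Suc n" by force
  let ?T = "tree_V d m"
  have AT: "A \<subseteq> ?T" using I unfolding Inv_def by (elim conjE) assumption
  have A0: "[] \<in> A" using I unfolding Inv_def by (elim conjE) assumption
  have "A \<noteq> ?T" using cA Suc.prems by auto
  then obtain w0 where "w0 \<in> ?T - A" using AT by blast
  then obtain w where w: "w \<in> ?T - A" and wmin: "\<forall>y. y \<in> ?T - A \<longrightarrow> length w \<le> length y"
    using ex_has_least_nat[of "\<lambda>x. x \<in> ?T - A" w0 length] by blast
  have wne: "w \<noteq> []" using w A0 by auto
  have bT: "butlast w \<in> ?T" using w unfolding tree_V_def by (auto dest: in_set_butlastD)
  have "length (butlast w) < length w" using wne by (cases w rule: rev_cases) auto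
  then have bA: "butlast w \<in> A" using wmin bT by force
  have "card A * (r + 1) \<le> m'" using m' cA Suc.prems
    by (metis Suc_lessD less_or_eq_imp_le mult_le_mono1 order_trans)
  then obtain f' Q' where I': "Inv V E r m' d m (insert w A) f' Q'"
    using step[OF g I _ _ bA wne] w by blast
  have "finite A" using AT finite_tree finite_subset by blast
  then have "card (insert w A) = Suc (Suc n)" using w cA by simp
  then show ?case using I' by blast
qed

lemma minor:
  assumes I: "Inv V E r m' d m (tree_V d m) f Q"
  shows "shallow_top_minor r (tree_V d m) (tree_E d m) V E"
proof -
  let ?T = "tree_V d m"
  have i4: "\<forall>w\<in>?T. f w \<in> V \<and> f w \<notin> ranked V E r m' (d - length w)" using I unfolding Inv_def by (elim conjE) assumption
  have i5: "inj_on f ?T" using I unfolding Inv_def by (elim conjE) assumption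
  have i6: "\<forall>w\<in>?T-{[]}. is_path V E (Q w) \<and> hd (Q w) = f (butlast w) \<and> last (Q w) = f w \<and>
      length (Q w) \<le> r + 1 \<and> interior (Q w) \<inter> f ` ?T = {}" using I unfolding Inv_def by (elim conjE) assumption
  have i7: "\<forall>w\<in>?T-{[]}. \<forall>w'\<in>?T-{[]}. w \<noteq> w' \<longrightarrow> interior (Q w) \<inter> interior (Q w') = {}" using I unfolding Inv_def by (elim conjE) assumption
  define P where "P = (\<lambda>s. Q (THE c. c \<in> s \<and> c \<noteq> [] \<and> butlast c \<in> s))"
  have Pc: "P {butlast c, c} = Q c" if "c \<noteq> []" for c
    unfolding P_def using the_child[OF that] by simp
  have fT: "f ` ?T \<subseteq> V" using i4 by blast
  have e1: "is_path V E (P {a, b}) \<and> {hd (P {a, b}), last (P {a, b})} = {f a, f b} \<and>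
            length (P {a, b}) \<le> r + 2 \<and> interior (P {a, b}) \<inter> f ` ?T = {}" if ab: "tree_E d m a b" for a b
  proof -
    obtain c where c: "c \<in> ?T" "c \<noteq> []" "butlast c \<in> ?T" "{a, b} = {butlast c, c}"
      using tree_edge[OF ab] by blast
    have "is_path V E (Q c) \<and> hd (Q c) = f (butlast c) \<and> last (Q c) = f c \<and>
      length (Q c) \<le> r + 1 \<and> interior (Q c) \<inter> f ` ?T = {}" using i6 c by blast
    moreover have "{f a, f b} = {f (butlast c), f c}" using c(4) by (metis doubleton_eq_iff)
    ultimately show ?thesis using c Pc by auto
  qed
  have e2: "interior (P {a, b}) \<inter> interior (P {a', b'}) = {}"
    if ab: "tree_E d m a b" and ab': "tree_E d m a' b'" and ne: "{a, b} \<noteq> {a', b'}" for a b a' b'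
  proof -
    obtain c where c: "c \<in> ?T" "c \<noteq> []" "butlast c \<in> ?T" "{a, b} = {butlast c, c}"
      using tree_edge[OF ab] by blast
    obtain c' where c': "c' \<in> ?T" "c' \<noteq> []" "butlast c' \<in> ?T" "{a', b'} = {butlast c', c'}"
      using tree_edge[OF ab'] by blast
    have "c \<noteq> c'" using ne c(4) c'(4) by auto
    then have "interior (Q c) \<inter> interior (Q c') = {}" using i7 c c' by blast
    then show ?thesis using c c' Pc by simp
  qed
  show ?thesis unfolding shallow_top_minor_def
    using i5 fT e1 e2 by blast
qed

theorem lemma3p5:
  fixes d r :: nat
  shows "\<forall>m. \<exists>m'. \<forall>(V :: nat set) E. graph V E \<longrightarrow> rank_gt V E r m' d \<longrightarrow>
           shallow_top_minor r (tree_V d m) (tree_E d m) V E"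
proof
  fix m
  let ?T = "tree_V d m"
  let ?m' = "card ?T * (r + 1)"
  have "\<forall>(V :: nat set) E. graph V E \<longrightarrow> rank_gt V E r ?m' d \<longrightarrow>
           shallow_top_minor r ?T (tree_E d m) V E"
  proof (intro allI impI)
    fix V :: "nat set" and E
    assume g: "graph V E" and rk: "rank_gt V E r ?m' d"
    then obtain v0 where v0: "v0 \<in> V" "v0 \<notin> ranked V E r ?m' d" unfolding rank_gt_def by blast
    have T0: "[] \<in> ?T" unfolding tree_V_def by simp
    have fT: "finite ?T" by (rule finite_tree)
    then have cpos: "card ?T > 0" using T0 card_gt_0_iff by blast
    then obtain A f Q where I: "Inv V E r ?m' d m A f Q" and cA: "card A = Suc (card ?T - 1)"
      using build[OF g v0 order_refl, of "card ?T - 1"] by auto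
    have AT: "A \<subseteq> ?T" using I unfolding Inv_def by (elim conjE) assumption
    have "A = ?T" using card_subset_eq[OF fT AT] cA cpos by simp
    then show "shallow_top_minor r ?T (tree_E d m) V E" using minor I by blast
  qed
  then show "\<exists>m'. \<forall>(V :: nat set) E. graph V E \<longrightarrow> rank_gt V E r m' d \<longrightarrow>
           shallow_top_minor r ?T (tree_E d m) V E" by blast
qed

end
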